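(* Let $n\ge2$ and $\epsilon>0$. For every $\epsilon$-optimal vector strategy $\{u_r\},\{v_j\}$ for the game $\mathrm{CHSH}(n)$, the vectors $v_1,\dots,v_n$ span a real subspace of dimension at least $n-8\sqrt2\,n(n-1)\epsilon$; in particular the strategy lives in a space of at least that dimension.
   Context: $\mathrm{CHSH}(n)$ is the $n(n-1)\times n$ XOR game whose columns are indexed by $\{1,\dots,n\}$ and which has, for each pair $1\le i<j\le n$, the two rows $(e_i-e_j)/(2n(n-1))$ and $(e_i+e_j)/(2n(n-1))$ ($e_i$ the standard basis row vectors). Its quantum success bias is $1/\sqrt2$. A vector strategy for an $m\times n$ game with cost matrix $G$ is a pair of families of unit vectors $u_1,\dots,u_m$, $v_1,\dots,v_n$ in some $\mathbb{R}^N$, with bias $\sum G_{rj}u_r\cdot v_j$; it is $\epsilon$-optimal if its bias is at least $\varepsilon_q(G)-\epsilon$, where $\varepsilon_q(G)$ is the maximum bias over vector strategies. *)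

theory Defs
  imports "HOL-Analysis.Analysis"
begin

definition xor_bias :: "('r \<Rightarrow> 'c \<Rightarrow> real) \<Rightarrow> 'r set \<Rightarrow> 'c set
    \<Rightarrow> ('r \<Rightarrow> 'a::real_inner) \<Rightarrow> ('c \<Rightarrow> 'a) \<Rightarrow> real" where
  "xor_bias G R C u v = (\<Sum>r\<in>R. \<Sum>j\<in>C. G r j * (u r \<bullet> v j))"

definition is_vector_strategy :: "'r set \<Rightarrow> 'c set
    \<Rightarrow> ('r \<Rightarrow> 'a::real_normed_vector) \<Rightarrow> ('c \<Rightarrow> 'a) \<Rightarrow> bool" where
  "is_vector_strategy R C u v \<longleftrightarrow> (\<forall>r\<in>R. norm (u r) = 1) \<and> (\<forall>j\<in>C. norm (v j) = 1)"

text \<open>Vectors of R^N in coordinates: functions nat => real, only coordinates k < N matter.\<close>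
definition coord_inner :: "nat \<Rightarrow> (nat \<Rightarrow> real) \<Rightarrow> (nat \<Rightarrow> real) \<Rightarrow> real" where
  "coord_inner N x y = (\<Sum>k<N. x k * y k)"

definition coord_bias :: "nat \<Rightarrow> ('r \<Rightarrow> 'c \<Rightarrow> real) \<Rightarrow> 'r set \<Rightarrow> 'c set
    \<Rightarrow> ('r \<Rightarrow> nat \<Rightarrow> real) \<Rightarrow> ('c \<Rightarrow> nat \<Rightarrow> real) \<Rightarrow> real" where
  "coord_bias N G R C u v = (\<Sum>r\<in>R. \<Sum>j\<in>C. G r j * coord_inner N (u r) (v j))"

definition coord_strategy :: "nat \<Rightarrow> 'r set \<Rightarrow> 'c set
    \<Rightarrow> ('r \<Rightarrow> nat \<Rightarrow> real) \<Rightarrow> ('c \<Rightarrow> nat \<Rightarrow> real) \<Rightarrow> bool" where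
  "coord_strategy N R C u v \<longleftrightarrow>
     (\<forall>r\<in>R. coord_inner N (u r) (u r) = 1) \<and> (\<forall>j\<in>C. coord_inner N (v j) (v j) = 1)"

definition quantum_bias :: "('r \<Rightarrow> 'c \<Rightarrow> real) \<Rightarrow> 'r set \<Rightarrow> 'c set \<Rightarrow> real" where
  "quantum_bias G R C =
     Sup {coord_bias N G R C u v | N u v. coord_strategy N R C u v}"

text \<open>CHSH(n): columns 1..n; for each 1 <= i < j <= n two rows (i,j,False) = (e_i - e_j)/(2n(n-1))
  and (i,j,True) = (e_i + e_j)/(2n(n-1)).\<close>
definition chsh_rows :: "nat \<Rightarrow> (nat \<times> nat \<times> bool) set" where
  "chsh_rows n = {(i, j, s). 1 \<le> i \<and> i < j \<and> j \<le> n}"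

definition chsh_cols :: "nat \<Rightarrow> nat set" where
  "chsh_cols n = {1..n}"

definition chsh_G :: "nat \<Rightarrow> nat \<times> nat \<times> bool \<Rightarrow> nat \<Rightarrow> real" where
  "chsh_G n = (\<lambda>(i, j, s) k.
     ((if k = i then 1 else 0) + (if s then 1 else -1) * (if k = j then 1 else 0))
       / (2 * real n * (real n - 1)))"

end

theory Submission
  imports Defs
begin


lemma real_aux:
  fixes q f c p :: real
  assumes qq: "q*q = 2" and q0: "q > 0" and fle: "f \<le> 2*q" and f0: "f \<ge> 0"
    and f2: "f*f = 4 + 2*p" and xy: "p \<le> 2 - c*c"
  shows "c*c \<le> 2*q*(2*q - f)"
proof -
  have "8 - f*f = (2*q - f) * (2*q + f)" using qq by (simp add: algebra_simps)
  also have "\<dots> \<le> (2*q - f) * (4*q)" using fle by (intro mult_left_mono) auto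
  finally have h: "8 - f*f \<le> (2*q - f) * (4*q)" .
  have "(2*q - f) * (4*q) = 2*(2*q*(2*q - f))" by (simp add: algebra_simps)
  thus ?thesis using h f2 xy by linarith
qed
lemma pair_bound:
  fixes a b :: "'a::real_inner"
  assumes "norm a = 1" "norm b = 1"
  shows "(a \<bullet> b)^2 \<le> 2 * sqrt 2 * (2 * sqrt 2 - (norm (a - b) + norm (a + b)))"
proof -
  define c where "c = a \<bullet> b"
  define x where "x = norm (a - b)"
  define y where "y = norm (a + b)"
  have aa: "a \<bullet> a = 1" "b \<bullet> b = 1" using assms by (simp_all add: dot_square_norm)
  have x2: "x^2 = 2 - 2*c" unfolding x_def c_def
    by (simp add: power2_norm_eq_inner inner_diff_left inner_diff_right aa inner_commute)
  have y2: "y^2 = 2 + 2*c" unfolding y_def c_def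
    by (simp add: power2_norm_eq_inner inner_add_left inner_add_right aa inner_commute)
  have x0: "x \<ge> 0" "y \<ge> 0" by (simp_all add: x_def y_def)
  have "\<bar>c\<bar> \<le> 1" using x2 y2 by (smt (verit) zero_le_power2)
  hence c1: "c^2 \<le> 1" by (simp add: abs_square_le_1)
  have "(x*y)^2 = x^2*y^2" by (simp add: power_mult_distrib)
  also have "\<dots> = (2-2*c)*(2+2*c)" by (simp add: x2 y2)
  finally have xy2: "(x*y)^2 = 4 - 4*c^2" by (simp add: algebra_simps power2_eq_square)
  have e: "(2 - c^2)^2 = 4 - 4*c^2 + (c^2)^2" by (simp add: power2_eq_square algebra_simps)
  have "(x*y)^2 \<le> (2 - c^2)^2" unfolding e xy2 by simp
  moreover have "0 \<le> 2 - c^2" using c1 by linarith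
  ultimately have xy: "x*y \<le> 2 - c^2" by (rule power2_le_imp_le)
  define f where "f = x + y"
  have s2: "sqrt 2 * sqrt 2 = 2" by simp
  have s0: "sqrt 2 > 0" by simp
  have "f^2 = x^2 + y^2 + 2*x*y" unfolding f_def by (simp add: power2_sum)
  hence f2: "f^2 = 4 + 2*x*y" using x2 y2 by linarith
  have fle: "f \<le> 2 * sqrt 2"
  proof -
    have "0 \<le> (x-y)^2" by simp
    moreover have "(x-y)^2 = x^2+y^2-2*x*y" by (simp add: power2_diff)
    ultimately have "2*x*y \<le> x^2+y^2" by linarith
    moreover have "(2* sqrt 2)^2 = 8" by (simp add: power_mult_distrib)
    ultimately have "f^2 \<le> (2* sqrt 2)^2" using f2 x2 y2 by linarith
    moreover have "0 \<le> 2 * sqrt 2" by simp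
    ultimately show ?thesis by (rule power2_le_imp_le)
  qed
  have f0: "f \<ge> 0" using x0 f_def by simp
  have "c*c \<le> 2* sqrt 2*(2* sqrt 2 - f)"
    by (rule real_aux[where p="x*y"]) (use fle f0 f2 xy in \<open>auto simp: power2_eq_square\<close>)
  thus ?thesis unfolding f_def c_def x_def y_def by (simp add: power2_eq_square)
qed

lemma dim_bound:
  fixes v :: "'i \<Rightarrow> 'a::euclidean_space"
  assumes C: "finite C" and nv: "\<And>i. i \<in> C \<Longrightarrow> norm (v i) = 1"
  shows "real (card C)^2 \<le> real (dim (v ` C)) * (\<Sum>i\<in>C. \<Sum>j\<in>C. (v i \<bullet> v j)^2)"
proof -
  obtain B where BS: "B \<subseteq> span (v ` C)" and orth: "pairwise orthogonal B"
    and B1: "\<And>x. x \<in> B \<Longrightarrow> norm x = 1" and ind: "independent B"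
    and cB: "card B = dim (span (v ` C))" and sB: "span B = span (v ` C)"
    by (metis orthonormal_basis_subspace subspace_span)
  have fB: "finite B" using ind independent_imp_finite by blast
  have cB': "card B = dim (v ` C)" using cB by (simp add: dim_span)
  have ip: "v i \<bullet> v j = (\<Sum>b\<in>B. (v i \<bullet> b) * (v j \<bullet> b))" if "i \<in> C" for i j
  proof -
    have "v i \<in> span B" using sB that by (simp add: span_base)
    hence "v i = (\<Sum>b\<in>B. (v i \<bullet> b) *\<^sub>R b)" using orthonormal_basis_expand[OF orth B1 _ fB] by auto
    hence "v i \<bullet> v j = (\<Sum>b\<in>B. (v i \<bullet> b) *\<^sub>R b) \<bullet> v j" by simp
    also have "\<dots> = (\<Sum>b\<in>B. (v i \<bullet> b) * (v j \<bullet> b))" by (simp add: inner_sum_left inner_sum_right inner_commute)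
    finally show ?thesis .
  qed
  define T where "T b b' = (\<Sum>i\<in>C. (v i \<bullet> b) * (v i \<bullet> b'))" for b b'
  have "real (card C) = (\<Sum>i\<in>C. v i \<bullet> v i)"
    using nv by (simp add: dot_square_norm)
  also have "\<dots> = (\<Sum>i\<in>C. \<Sum>b\<in>B. (v i \<bullet> b) * (v i \<bullet> b))" using ip by simp
  also have "\<dots> = (\<Sum>b\<in>B. T b b)" unfolding T_def by (rule sum.swap)
  finally have cc: "real (card C) = (\<Sum>b\<in>B. T b b)" .
  have s1: "real (card C)^2 \<le> (\<Sum>b\<in>B. (T b b)^2) * card B"
    unfolding cc by (rule sum_squared_le_sum_of_squares)
  have "(\<Sum>b\<in>B. (T b b)^2) \<le> (\<Sum>b\<in>B. \<Sum>b'\<in>B. (T b b')^2)"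
    by (intro sum_mono member_le_sum[where f="\<lambda>b'. (T _ b')^2"]) (auto simp: fB)
  also have "(\<Sum>b\<in>B. \<Sum>b'\<in>B. (T b b')^2) = (\<Sum>i\<in>C. \<Sum>j\<in>C. (v i \<bullet> v j)^2)"
  proof -
    have "(\<Sum>b\<in>B. \<Sum>b'\<in>B. (T b b')^2) = (\<Sum>b\<in>B. \<Sum>b'\<in>B. \<Sum>i\<in>C. \<Sum>j\<in>C.
        ((v i \<bullet> b) * (v j \<bullet> b)) * ((v i \<bullet> b') * (v j \<bullet> b')))"
      unfolding T_def power2_eq_square sum_product by (simp add: algebra_simps)
    also have "\<dots> = (\<Sum>i\<in>C. \<Sum>j\<in>C. \<Sum>b\<in>B. \<Sum>b'\<in>B.
        ((v i \<bullet> b) * (v j \<bullet> b)) * ((v i \<bullet> b') * (v j \<bullet> b')))"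
      by (subst sum.swap, subst (2) sum.swap, subst sum.swap, simp add: sum.swap[of _ B C])
    also have "\<dots> = (\<Sum>i\<in>C. \<Sum>j\<in>C. (v i \<bullet> v j)^2)"
      by (intro sum.cong refl) (simp add: ip power2_eq_square sum_product)
    finally show ?thesis .
  qed
  finally have "(\<Sum>b\<in>B. (T b b)^2) \<le> (\<Sum>i\<in>C. \<Sum>j\<in>C. (v i \<bullet> v j)^2)" .
  hence "(\<Sum>b\<in>B. (T b b)^2) * card B \<le> (\<Sum>i\<in>C. \<Sum>j\<in>C. (v i \<bullet> v j)^2) * card B"
    by (rule mult_right_mono) simp
  thus ?thesis using s1 cB' by (metis (no_types, lifting) mult.commute order_trans)
qed



lemma rows_eq: "chsh_rows n = Sigma {1..n} (\<lambda>i. Sigma {i<..n} (\<lambda>j. UNIV))"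
  by (auto simp: chsh_rows_def)

lemma sum_rows:
  "(\<Sum>r\<in>chsh_rows n. h r) = (\<Sum>i\<in>{1..n}. \<Sum>j\<in>{i<..n}. h (i,j,False) + h (i,j,True))"
proof -
  have "(\<Sum>r\<in>chsh_rows n. h r) = (\<Sum>i\<in>{1..n}. \<Sum>p\<in>Sigma {i<..n} (\<lambda>j. UNIV). h (i,p))"
    unfolding rows_eq by (subst sum.Sigma) auto
  also have "\<dots> = (\<Sum>i\<in>{1..n}. \<Sum>j\<in>{i<..n}. \<Sum>s\<in>UNIV. h (i,j,s))"
    by (intro sum.cong refl, subst sum.Sigma) auto
  also have "\<dots> = (\<Sum>i\<in>{1..n}. \<Sum>j\<in>{i<..n}. h (i,j,False) + h (i,j,True))"
    by (simp add: UNIV_bool)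
  finally show ?thesis .
qed

lemma row_sum:
  assumes "i \<in> {1..n}" "j \<in> {1..n}" "i \<noteq> j"
  shows "(\<Sum>k\<in>{1..n}. chsh_G n (i,j,s) k * g k)
     = (g i + (if s then 1 else -1) * g j) / (2 * real n * (real n - 1))"
proof -
  define K where "K = 2 * real n * (real n - 1)"
  define \<sigma> :: real where "\<sigma> = (if s then 1 else -1)"
  have "\<And>k. chsh_G n (i,j,s) k * g k = ((if k = i then g k else 0) + \<sigma> * (if k = j then g k else 0)) / K"
    by (simp add: chsh_G_def K_def \<sigma>_def ring_distribs)
  hence "(\<Sum>k\<in>{1..n}. chsh_G n (i,j,s) k * g k) = 
     (\<Sum>k\<in>{1..n}. ((if k = i then g k else 0) + \<sigma> * (if k = j then g k else 0)) / K)"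
    by (intro sum.cong) auto
  also have "\<dots> = ((\<Sum>k\<in>{1..n}. (if k = i then g k else 0)) + (\<Sum>k\<in>{1..n}. \<sigma> * (if k = j then g k else 0))) / K"
    unfolding sum_divide_distrib[symmetric] sum.distrib ..
  also have "(\<Sum>k\<in>{1..n}. (if k = i then g k else 0)) = g i" using assms by (simp add: sum.delta)
  also have "(\<Sum>k\<in>{1..n}. \<sigma> * (if k = j then g k else 0)) = \<sigma> * g j"
    using assms by (simp add: sum_distrib_left[symmetric] sum.delta)
  finally show ?thesis by (simp add: K_def \<sigma>_def)
qed

lemma ci_bound:
  assumes "coord_inner N x x = 1" "coord_inner N y y = 1"
  shows "\<bar>coord_inner N x y\<bar> \<le> 1"
proof -
  have a: "x k * y k \<le> (x k * x k + y k * y k) / 2" for k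
  proof -
    have "0 \<le> (x k - y k)^2" by simp
    thus ?thesis by (simp add: power2_eq_square algebra_simps)
  qed
  have b: "- (x k * y k) \<le> (x k * x k + y k * y k) / 2" for k
  proof -
    have "0 \<le> (x k + y k)^2" by simp
    thus ?thesis by (simp add: power2_eq_square algebra_simps)
  qed
  have "coord_inner N x y \<le> (\<Sum>k<N. (x k * x k + y k * y k) / 2)"
    unfolding coord_inner_def by (rule sum_mono) (rule a)
  moreover have "- coord_inner N x y \<le> (\<Sum>k<N. (x k * x k + y k * y k) / 2)"
    unfolding coord_inner_def sum_negf[symmetric] by (rule sum_mono) (rule b)
  moreover have "(\<Sum>k<N. (x k * x k + y k * y k) / 2) = 1"
    using assms by (simp add: coord_inner_def sum_divide_distrib[symmetric] sum.distrib)
  ultimately show ?thesis by linarith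
qed



lemma sym_sum:
  fixes g :: "nat \<Rightarrow> nat \<Rightarrow> real"
  assumes sym: "\<And>i j. g i j = g j i"
  shows "(\<Sum>i\<in>{1..n}. \<Sum>j\<in>{1..n}. g i j) = (\<Sum>i\<in>{1..n}. g i i) + 2 * (\<Sum>i\<in>{1..n}. \<Sum>j\<in>{i<..n}. g i j)"
proof -
  have split: "(\<Sum>j\<in>{1..n}. g i j) = (\<Sum>j\<in>{j. j \<in> {1..n} \<and> j < i}. g i j) + g i i + (\<Sum>j\<in>{i<..n}. g i j)"
    if "i \<in> {1..n}" for i
  proof -
    have "(\<Sum>j\<in>{1..n}. g i j) = (\<Sum>j\<in>{1..n}. (if j < i then g i j else 0) + (if j = i then g i j else 0) + (if i < j then g i j else 0))"
      by (intro sum.cong) auto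
    also have "\<dots> = (\<Sum>j\<in>{1..n}. (if j < i then g i j else 0)) + (\<Sum>j\<in>{1..n}. (if j = i then g i j else 0)) + (\<Sum>j\<in>{1..n}. (if i < j then g i j else 0))"
      by (simp add: sum.distrib)
    also have "(\<Sum>j\<in>{1..n}. (if j < i then g i j else 0)) = (\<Sum>j\<in>{j. j \<in> {1..n} \<and> j < i}. g i j)"
      by (rule sum.inter_filter[symmetric]) simp
    also have "(\<Sum>j\<in>{1..n}. (if j = i then g i j else 0)) = g i i" using that by (simp add: sum.delta)
    also have "(\<Sum>j\<in>{1..n}. (if i < j then g i j else 0)) = (\<Sum>j\<in>{j. j \<in> {1..n} \<and> i < j}. g i j)"
      by (rule sum.inter_filter[symmetric]) simp
    also have "{j. j \<in> {1..n} \<and> i < j} = {i<..n}" by auto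
    finally show ?thesis .
  qed
  have "(\<Sum>i\<in>{1..n}. \<Sum>j\<in>{1..n}. g i j) = (\<Sum>i\<in>{1..n}. (\<Sum>j\<in>{j. j \<in> {1..n} \<and> j < i}. g i j) + g i i + (\<Sum>j\<in>{i<..n}. g i j))"
    by (intro sum.cong refl split)
  also have "\<dots> = (\<Sum>i\<in>{1..n}. \<Sum>j\<in>{j. j \<in> {1..n} \<and> j < i}. g i j) + (\<Sum>i\<in>{1..n}. g i i) + (\<Sum>i\<in>{1..n}. \<Sum>j\<in>{i<..n}. g i j)"
    by (simp add: sum.distrib)
  also have "(\<Sum>i\<in>{1..n}. \<Sum>j\<in>{j. j \<in> {1..n} \<and> j < i}. g i j) = (\<Sum>j\<in>{1..n}. \<Sum>i\<in>{i. i \<in> {1..n} \<and> j < i}. g i j)"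
    using sum.swap_restrict[of "{1..n}" "{1..n}" g "\<lambda>i j. j < i"] by simp
  also have "\<dots> = (\<Sum>i\<in>{1..n}. \<Sum>j\<in>{i<..n}. g i j)"
  proof (rule sum.cong[OF refl])
    fix j assume "j \<in> {1..n}"
    have "{i. i \<in> {1..n} \<and> j < i} = {j<..n}" by auto
    thus "(\<Sum>i\<in>{i. i \<in> {1..n} \<and> j < i}. g i j) = (\<Sum>i\<in>{j<..n}. g j i)" by (simp add: sym)
  qed
  finally show ?thesis by simp
qed


theorem proposition7p2:
  fixes n :: nat and \<epsilon> :: real
    and u :: "nat \<times> nat \<times> bool \<Rightarrow> 'a::euclidean_space" and v :: "nat \<Rightarrow> 'a"
  assumes "n \<ge> 2" and "\<epsilon> > 0"
    and "is_vector_strategy (chsh_rows n) (chsh_cols n) u v"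
    and "xor_bias (chsh_G n) (chsh_rows n) (chsh_cols n) u v
           \<ge> quantum_bias (chsh_G n) (chsh_rows n) (chsh_cols n) - \<epsilon>"
  shows "real (dim (v ` chsh_cols n)) \<ge> real n - 8 * sqrt 2 * real n * (real n - 1) * \<epsilon>
       \<and> real DIM('a) \<ge> real n - 8 * sqrt 2 * real n * (real n - 1) * \<epsilon>"
proof -
  define K where "K = 2 * real n * (real n - 1)"
  have n2: "real n \<ge> 2" using assms(1) by simp
  have Kpos: "K > 0" unfolding K_def using n2 by simp
  have Ceq: "chsh_cols n = {1..n}" by (simp add: chsh_cols_def)
  have vn: "\<And>k. k \<in> {1..n} \<Longrightarrow> norm (v k) = 1"
    using assms(3) by (auto simp: is_vector_strategy_def chsh_cols_def)
  have un: "\<And>r. r \<in> chsh_rows n \<Longrightarrow> norm (u r) = 1"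
    using assms(3) by (auto simp: is_vector_strategy_def)
  define f where "f i j = norm (v i - v j) + norm (v i + v j)" for i j
  define Q where "Q = (\<Sum>i\<in>{1..n}. \<Sum>j\<in>{i<..n}. 2 * sqrt 2 / K)"
  have rowb: "(\<Sum>k\<in>{1..n}. chsh_G n (i,j,s) k * (u (i,j,s) \<bullet> v k))
      \<le> norm (v i + (if s then 1 else -1) *\<^sub>R v j) / K"
    if ij: "i \<in> {1..n}" "j \<in> {i<..n}" for i j s
  proof -
    have r: "(i,j,s) \<in> chsh_rows n" using ij by (auto simp: chsh_rows_def)
    have "(\<Sum>k\<in>{1..n}. chsh_G n (i,j,s) k * (u (i,j,s) \<bullet> v k))
       = (u (i,j,s) \<bullet> v i + (if s then 1 else -1) * (u (i,j,s) \<bullet> v j)) / K"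
      using row_sum[of i n j s "\<lambda>k. u (i,j,s) \<bullet> v k"] ij unfolding K_def by simp
    also have "\<dots> = (u (i,j,s) \<bullet> (v i + (if s then 1 else -1) *\<^sub>R v j)) / K"
      by (simp add: inner_add_right)
    also have "\<dots> \<le> norm (v i + (if s then 1 else -1) *\<^sub>R v j) / K"
      using norm_cauchy_schwarz[of "u (i,j,s)" "v i + (if s then 1 else -1) *\<^sub>R v j"] un[OF r] Kpos
      by (intro divide_right_mono) auto
    finally show ?thesis .
  qed
  have xb: "xor_bias (chsh_G n) (chsh_rows n) (chsh_cols n) u v \<le> (\<Sum>i\<in>{1..n}. \<Sum>j\<in>{i<..n}. f i j / K)"
    unfolding xor_bias_def Ceq sum_rows
  proof (intro sum_mono)
    fix i j assume ij: "i \<in> {1..n}" "j \<in> {i<..n}"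
    have "(\<Sum>k\<in>{1..n}. chsh_G n (i,j,False) k * (u (i,j,False) \<bullet> v k)) \<le> norm (v i - v j) / K"
      using rowb[OF ij, of False] by simp
    moreover have "(\<Sum>k\<in>{1..n}. chsh_G n (i,j,True) k * (u (i,j,True) \<bullet> v k)) \<le> norm (v i + v j) / K"
      using rowb[OF ij, of True] by simp
    ultimately show "(\<Sum>k\<in>{1..n}. chsh_G n (i,j,False) k * (u (i,j,False) \<bullet> v k))
        + (\<Sum>k\<in>{1..n}. chsh_G n (i,j,True) k * (u (i,j,True) \<bullet> v k)) \<le> f i j / K"
      unfolding f_def by (simp add: add_divide_distrib)
  qed
  have qb: "Q \<le> quantum_bias (chsh_G n) (chsh_rows n) (chsh_cols n)"
  proof -
    define N where "N = Suc n"
    define v' :: "nat \<Rightarrow> nat \<Rightarrow> real" where "v' k = (\<lambda>m. if m = k then 1 else 0)" for k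
    define u' :: "nat \<times> nat \<times> bool \<Rightarrow> nat \<Rightarrow> real" where
      "u' = (\<lambda>(i,j,s) m. if m = i then 1 / sqrt 2 else if m = j then (if s then 1 else -1) / sqrt 2 else 0)"
    have civ: "coord_inner N x (v' k) = x k" if "k < N" for x k
    proof -
      have "coord_inner N x (v' k) = (\<Sum>m<N. if m = k then x m else 0)"
        unfolding coord_inner_def v'_def by (intro sum.cong) auto
      also have "\<dots> = x k" using that by (simp add: sum.delta)
      finally show ?thesis .
    qed
    have s2: "1 / sqrt 2 * (1 / sqrt 2) = (1/2::real)" by (simp add: divide_simps)
    have uu: "coord_inner N (u' (i,j,s)) (u' (i,j,s)) = 1" if ij: "i \<in> {1..n}" "j \<in> {i<..n}" for i j s
    proof -
      have pt: "u' (i,j,s) m * u' (i,j,s) m = (if m = i then 1/2 else 0) + (if m = j then 1/2 else 0)" for m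
        using ij s2 by (auto simp: u'_def)
      have "coord_inner N (u' (i,j,s)) (u' (i,j,s)) = (\<Sum>m<N. (if m = i then 1/2 else 0) + (if m = j then 1/2 else 0))"
        unfolding coord_inner_def pt ..
      also have "\<dots> = 1" using ij by (simp add: sum.distrib sum.delta N_def)
      finally show ?thesis .
    qed
    have strat: "coord_strategy N (chsh_rows n) (chsh_cols n) u' v'"
      unfolding coord_strategy_def
    proof (intro conjI ballI)
      fix r assume "r \<in> chsh_rows n"
      then obtain i j s where r: "r = (i,j,s)" "i \<in> {1..n}" "j \<in> {i<..n}" by (auto simp: chsh_rows_def)
      show "coord_inner N (u' r) (u' r) = 1" using uu[OF r(2,3)] r(1) by simp
    next
      fix k assume "k \<in> chsh_cols n"
      hence "k < N" by (simp add: chsh_cols_def N_def)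
      thus "coord_inner N (v' k) (v' k) = 1" using civ by (simp add: v'_def)
    qed
    have r2: "1 / sqrt 2 + 1 / sqrt 2 = sqrt (2::real)" by (simp add: field_simps)
    have rowv: "(\<Sum>k\<in>{1..n}. chsh_G n (i,j,s) k * coord_inner N (u' (i,j,s)) (v' k)) = sqrt 2 / K"
      if ij: "i \<in> {1..n}" "j \<in> {i<..n}" for i j s
    proof -
      have "(\<Sum>k\<in>{1..n}. chsh_G n (i,j,s) k * coord_inner N (u' (i,j,s)) (v' k))
          = (\<Sum>k\<in>{1..n}. chsh_G n (i,j,s) k * u' (i,j,s) k)"
      proof (rule sum.cong[OF refl])
        fix k assume "k \<in> {1..n}"
        hence "k < N" by (simp add: N_def)
        thus "chsh_G n (i,j,s) k * coord_inner N (u' (i,j,s)) (v' k) = chsh_G n (i,j,s) k * u' (i,j,s) k"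
          by (simp add: civ)
      qed
      also have "\<dots> = (u' (i,j,s) i + (if s then 1 else -1) * u' (i,j,s) j) / K"
        using row_sum[of i n j s "u' (i,j,s)"] ij unfolding K_def by simp
      also have "\<dots> = sqrt 2 / K" using ij r2 by (auto simp: u'_def)
      finally show ?thesis .
    qed
    have cb: "coord_bias N (chsh_G n) (chsh_rows n) (chsh_cols n) u' v' = Q"
      unfolding coord_bias_def Ceq sum_rows Q_def
    proof (rule sum.cong[OF refl], rule sum.cong[OF refl])
      fix i j assume ij: "i \<in> {1..n}" "j \<in> {i<..n}"
      show "(\<Sum>k\<in>{1..n}. chsh_G n (i,j,False) k * coord_inner N (u' (i,j,False)) (v' k))
          + (\<Sum>k\<in>{1..n}. chsh_G n (i,j,True) k * coord_inner N (u' (i,j,True)) (v' k)) = 2 * sqrt 2 / K"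
        unfolding rowv[OF ij] by (simp add: field_simps)
    qed
    define B0 where "B0 = (\<Sum>r\<in>chsh_rows n. \<Sum>k\<in>chsh_cols n. \<bar>chsh_G n r k\<bar>)"
    have bdd: "bdd_above {coord_bias N G (chsh_rows n) (chsh_cols n) u v |N u v.
        coord_strategy N (chsh_rows n) (chsh_cols n) u v}" (is "bdd_above ?S") if "G = chsh_G n" for G
    proof (rule bdd_aboveI)
      fix x assume "x \<in> ?S"
      then obtain N1 u1 v1 where x: "x = coord_bias N1 G (chsh_rows n) (chsh_cols n) u1 v1"
        and st: "coord_strategy N1 (chsh_rows n) (chsh_cols n) u1 v1" by blast
      have "x \<le> B0" unfolding x coord_bias_def B0_def that
      proof (intro sum_mono)
        fix r k assume rk: "r \<in> chsh_rows n" "k \<in> chsh_cols n"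
        have "\<bar>coord_inner N1 (u1 r) (v1 k)\<bar> \<le> 1"
          using st rk by (intro ci_bound) (auto simp: coord_strategy_def)
        hence "\<bar>chsh_G n r k * coord_inner N1 (u1 r) (v1 k)\<bar> \<le> \<bar>chsh_G n r k\<bar>"
          by (simp add: abs_mult mult_left_le)
        thus "chsh_G n r k * coord_inner N1 (u1 r) (v1 k) \<le> \<bar>chsh_G n r k\<bar>" by linarith
      qed
      thus "x \<le> B0" .
    qed
    have "Q \<in> {coord_bias N (chsh_G n) (chsh_rows n) (chsh_cols n) u v |N u v.
        coord_strategy N (chsh_rows n) (chsh_cols n) u v}"
      using strat cb by blast
    thus ?thesis unfolding quantum_bias_def by (rule cSup_upper) (rule bdd, rule refl)
  qed
  have "Q - \<epsilon> \<le> (\<Sum>i\<in>{1..n}. \<Sum>j\<in>{i<..n}. f i j / K)" using qb assms(4) xb by linarith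
  hence "(\<Sum>i\<in>{1..n}. \<Sum>j\<in>{i<..n}. 2 * sqrt 2 / K) - (\<Sum>i\<in>{1..n}. \<Sum>j\<in>{i<..n}. f i j / K) \<le> \<epsilon>"
    unfolding Q_def by linarith
  moreover have "(\<Sum>i\<in>{1..n}. \<Sum>j\<in>{i<..n}. (2 * sqrt 2 - f i j) / K)
     = (\<Sum>i\<in>{1..n}. \<Sum>j\<in>{i<..n}. 2 * sqrt 2 / K) - (\<Sum>i\<in>{1..n}. \<Sum>j\<in>{i<..n}. f i j / K)"
    by (simp only: diff_divide_distrib sum_subtractf)
  ultimately have "(\<Sum>i\<in>{1..n}. \<Sum>j\<in>{i<..n}. (2 * sqrt 2 - f i j) / K) \<le> \<epsilon>" by simp
  hence "(\<Sum>i\<in>{1..n}. \<Sum>j\<in>{i<..n}. (2 * sqrt 2 - f i j)) / K \<le> \<epsilon>"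
    by (simp add: sum_divide_distrib)
  hence D: "(\<Sum>i\<in>{1..n}. \<Sum>j\<in>{i<..n}. (2 * sqrt 2 - f i j)) \<le> K * \<epsilon>"
    using Kpos by (simp add: divide_le_eq mult.commute)
  have "(\<Sum>i\<in>{1..n}. \<Sum>j\<in>{i<..n}. (v i \<bullet> v j)^2) \<le> (\<Sum>i\<in>{1..n}. \<Sum>j\<in>{i<..n}. 2 * sqrt 2 * (2 * sqrt 2 - f i j))"
  proof (intro sum_mono)
    fix i j assume "i \<in> {1..n}" "j \<in> {i<..n}"
    then show "(v i \<bullet> v j)^2 \<le> 2 * sqrt 2 * (2 * sqrt 2 - f i j)"
      unfolding f_def by (intro pair_bound vn) auto
  qed
  also have "\<dots> = 2 * sqrt 2 * (\<Sum>i\<in>{1..n}. \<Sum>j\<in>{i<..n}. (2 * sqrt 2 - f i j))"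
    by (simp add: sum_distrib_left)
  also have "\<dots> \<le> 2 * sqrt 2 * (K * \<epsilon>)" using D by (intro mult_left_mono) auto
  finally have Sc: "(\<Sum>i\<in>{1..n}. \<Sum>j\<in>{i<..n}. (v i \<bullet> v j)^2) \<le> 2 * sqrt 2 * (K * \<epsilon>)" .
  define T where "T = 8 * sqrt 2 * real n * (real n - 1) * \<epsilon>"
  have T0: "T \<ge> 0" unfolding T_def using n2 assms(2) by simp
  have "(\<Sum>i\<in>{1..n}. \<Sum>j\<in>{1..n}. (v i \<bullet> v j)^2)
      = (\<Sum>i\<in>{1..n}. (v i \<bullet> v i)^2) + 2 * (\<Sum>i\<in>{1..n}. \<Sum>j\<in>{i<..n}. (v i \<bullet> v j)^2)"
    by (rule sym_sum) (simp add: inner_commute)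
  also have "(\<Sum>i\<in>{1..n}. (v i \<bullet> v i)^2) = real n"
    using vn by (simp add: dot_square_norm)
  finally have eqf: "(\<Sum>i\<in>{1..n}. \<Sum>j\<in>{1..n}. (v i \<bullet> v j)^2)
      = real n + 2 * (\<Sum>i\<in>{1..n}. \<Sum>j\<in>{i<..n}. (v i \<bullet> v j)^2)" .
  have KT: "2 * (2 * sqrt 2 * (K * \<epsilon>)) = T" unfolding T_def K_def by (simp add: algebra_simps)
  have full: "(\<Sum>i\<in>{1..n}. \<Sum>j\<in>{1..n}. (v i \<bullet> v j)^2) \<le> real n + T"
    using Sc KT eqf by linarith
  define d where "d = real (dim (v ` chsh_cols n))"
  have d0: "d \<ge> 0" unfolding d_def by simp
  have "real (card {1..n})^2 \<le> real (dim (v ` {1..n})) * (\<Sum>i\<in>{1..n}. \<Sum>j\<in>{1..n}. (v i \<bullet> v j)^2)"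
    by (rule dim_bound) (auto intro: vn)
  hence "(real n)^2 \<le> d * (\<Sum>i\<in>{1..n}. \<Sum>j\<in>{1..n}. (v i \<bullet> v j)^2)"
    unfolding d_def Ceq by simp
  also have "\<dots> \<le> d * (real n + T)" using full d0 by (intro mult_left_mono) auto
  finally have nd: "(real n)^2 \<le> d * (real n + T)" .
  have main: "real n - T \<le> d"
  proof (rule ccontr)
    assume "\<not> real n - T \<le> d"
    hence lt: "d < real n - T" by simp
    have "d * (real n + T) < (real n - T) * (real n + T)"
      using lt n2 T0 by (intro mult_strict_right_mono) auto
    also have "\<dots> \<le> (real n)^2" by (simp add: power2_eq_square algebra_simps)
    finally show False using nd by simp
  qed
  have "dim (v ` chsh_cols n) \<le> DIM('a)" by (rule dim_subset_UNIV)
  hence "d \<le> real DIM('a)" unfolding d_def by simp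
  with main show ?thesis unfolding d_def T_def by simp
qed

end
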